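(* Fix integers $N\ge 2$ and $K\ge 1$. For any Boolean tensor $\mathcal{B}\in\{0,1\}^{N\times N\times K}$ with frontal slices $\mathbf{B}_1,\dots,\mathbf{B}_K$, and any $r\in\mathbb{N}^+$ with \[ r\ge\min\Big\{N,\;2\sum_{k=1}^K\mathrm{rrank}(\mathbf{B}_k)\Big\},\] the set $\pi(\mathcal{M}^{\text{RESCAL}}_r)$ contains a ranking tensor consistent with $\mathcal{B}$.
   Context: A score-based model assigns a score $s_k(i,j)\in\mathbb{R}$ to each triple, $i,j\in\{1,\dots,N\}$, $k\in\{1,\dots,K\}$; its scoring tensor has frontal slices $\mathbf{S}_k$ with $[\mathbf{S}_k]_{ij}=s_k(i,j)$. For a real $N\times N$ matrix $\mathbf{S}$, $\pi(\mathbf{S})$ is the matrix of dense ranks: $\pi_{ij}(\mathbf{S})=1+$ (number of distinct values among entries of $\mathbf{S}$ strictly larger than $s_{ij}$). For tensors, $\pi$ acts slicewise; for a set $X$, $\pi(X)=\{\pi(x):x\in X\}$. RESCAL of size $r$: parameters $\mathbf{A}\in\mathbb{R}^{N\times r}$ (rows $\mathbf{a}_i$), $\mathbf{R}_1,\dots,\mathbf{R}_K\in\mathbb{R}^{r\times r}$, score $\mathbf{a}_i^T\mathbf{R}_k\mathbf{a}_j$; $\mathcal{M}^{\text{RESCAL}}_r$ is the set of scoring tensors of such models. A ranking tensor $\mathcal{P}$ is consistent with $\mathcal{B}$ if for every $k$ and all $i,j,i',j'$: $b_{ijk}=1$ and $b_{i'j'k}=0$ imply $p_{ijk}<p_{i'j'k}$.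 Rounding rank: for a real matrix, $\mathrm{round}$ maps each entry $x$ to $1$ if $x\ge 1/2$ and to $0$ otherwise; for a Boolean matrix $\mathbf{B}\in\{0,1\}^{m\times n}$, $\mathrm{rrank}(\mathbf{B})=\min\{\mathrm{rank}(\mathbf{A}):\mathbf{A}\in\mathbb{R}^{m\times n},\ \mathrm{round}(\mathbf{A})=\mathbf{B}\}$. *)

theory Defs
  imports "Jordan_Normal_Form.DL_Rank"
begin

(* Indices are 0-based: entities i,j \<in> {0..<N}, relations k \<in> {0..<K}.
   Tensors are functions k \<Rightarrow> i \<Rightarrow> j \<Rightarrow> value (frontal slice k first). *)

definition dense_rank :: "nat \<Rightarrow> (nat \<Rightarrow> nat \<Rightarrow> real) \<Rightarrow> nat \<Rightarrow> nat \<Rightarrow> nat" where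
  "dense_rank N S i j = 1 + card {v. (\<exists>i'<N. \<exists>j'<N. v = S i' j') \<and> v > S i j}"

definition pi_tensor :: "nat \<Rightarrow> (nat \<Rightarrow> nat \<Rightarrow> nat \<Rightarrow> real) \<Rightarrow> (nat \<Rightarrow> nat \<Rightarrow> nat \<Rightarrow> nat)" where
  "pi_tensor N S = (\<lambda>k i j. if i < N \<and> j < N then dense_rank N (S k) i j else 0)"

definition rescal_tensors :: "nat \<Rightarrow> nat \<Rightarrow> nat \<Rightarrow> (nat \<Rightarrow> nat \<Rightarrow> nat \<Rightarrow> real) set" where
  "rescal_tensors N K r = {S. \<exists>(A :: nat \<Rightarrow> nat \<Rightarrow> real) (R :: nat \<Rightarrow> nat \<Rightarrow> nat \<Rightarrow> real).
      \<forall>k<K. \<forall>i<N. \<forall>j<N. S k i j = (\<Sum>a<r. \<Sum>b<r. A i a * R k a b * A j b)}"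

definition consistent :: "nat \<Rightarrow> nat \<Rightarrow> (nat \<Rightarrow> nat \<Rightarrow> nat \<Rightarrow> nat) \<Rightarrow> (nat \<Rightarrow> nat \<Rightarrow> nat \<Rightarrow> bool) \<Rightarrow> bool" where
  "consistent N K P B \<longleftrightarrow> (\<forall>k<K. \<forall>i<N. \<forall>j<N. \<forall>i'<N. \<forall>j'<N.
      B k i j \<and> \<not> B k i' j' \<longrightarrow> P k i j < P k i' j')"

definition round_real :: "real \<Rightarrow> bool" where
  "round_real x \<longleftrightarrow> x \<ge> 1/2"

definition rrank :: "nat \<Rightarrow> nat \<Rightarrow> (nat \<Rightarrow> nat \<Rightarrow> bool) \<Rightarrow> nat" where
  "rrank m n B = (LEAST q. \<exists>M :: real mat. M \<in> carrier_mat m n \<and>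
      (\<forall>i<m. \<forall>j<n. round_real (M $$ (i,j)) = B i j) \<and> vec_space.rank m M = q)"

end

theory Submission imports Defs begin

lemma (in vec_space) rank_factor:
  assumes A: "A \<in> carrier_mat n nc"
  shows "\<exists>U W. \<forall>i<n. \<forall>j<nc. A $$ (i,j) = (\<Sum>t<rank A. U i t * W j t)"
proof -
  obtain S where max: "maximal S (\<lambda>T. T \<subseteq> set (cols A) \<and> lin_indpt T)"
    using maximal_exists[of "(\<lambda>T. T \<subseteq> set (cols A) \<and> lin_indpt T)" "card (set (cols A))" "{}"]
    by (meson List.finite_set card_mono empty_iff empty_subsetI finite_lin_indpt2 rev_finite_subset)
  have rk: "rank A = card S" by (rule rank_card_indpt[OF A max])
  have Ssub: "S \<subseteq> set (cols A)" and li: "lin_indpt S" using max unfolding maximal_def by auto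
  have fin: "finite S" using Ssub finite_subset by blast
  have colcar: "set (cols A) \<subseteq> carrier_vec n" using cols_dim[of A] A by auto
  have Scar: "S \<subseteq> carrier_vec n" using Ssub colcar by auto
  have inspan: "c \<in> span S" if c: "c \<in> set (cols A)" for c
  proof (cases "c \<in> S")
    case True then show ?thesis using in_own_span[OF Scar] by auto
  next
    case False
    have "\<not> (S \<union> {c} \<subseteq> set (cols A) \<and> lin_indpt (S \<union> {c}))"
    proof
      assume h: "S \<union> {c} \<subseteq> set (cols A) \<and> lin_indpt (S \<union> {c})"
      then have "S \<union> {c} = S" using max unfolding maximal_def by blast
      then show False using False by auto
    qed
    then have "lin_dep (S \<union> {c})" using c Ssub by auto
    then show ?thesis using lin_dep_iff_in_span[OF Scar li _ False] c colcar by auto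
  qed
  have "\<forall>j. \<exists>a. j < nc \<longrightarrow> lincomb a S = col A j"
  proof
    fix j
    show "\<exists>a. j < nc \<longrightarrow> lincomb a S = col A j"
    proof (cases "j < nc")
      case True
      then have "col A j \<in> set (cols A)" using A by (metis carrier_matD(2) cols_length cols_nth nth_mem)
      then have "col A j \<in> span S" by (rule inspan)
      then obtain a where "lincomb a S = col A j" using finite_in_span[OF fin Scar] by blast
      then show ?thesis by blast
    qed auto
  qed
  then obtain a where a: "\<And>j. j < nc \<Longrightarrow> lincomb (a j) S = col A j" by metis
  obtain h where h: "bij_betw h {0..<card S} S" using ex_bij_betw_nat_finite[OF fin] by blast
  have "A $$ (i,j) = (\<Sum>t<rank A. h t $ i * a j (h t))" if ij: "i < n" "j < nc" for i j
  proof -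
    have "A $$ (i,j) = col A j $ i" using A ij by auto
    also have "\<dots> = lincomb (a j) S $ i" using a ij by simp
    also have "\<dots> = (\<Sum>x\<in>S. a j x * x $ i)" by (rule lincomb_index[OF ij(1) Scar])
    also have "\<dots> = (\<Sum>t\<in>{0..<card S}. a j (h t) * h t $ i)"
      using sum.reindex_bij_betw[OF h, of "\<lambda>x. a j x * x $ i"] by simp
    finally show ?thesis using rk by (simp add: lessThan_atLeast0 mult.commute)
  qed
  note * = this
  show ?thesis by (rule exI[of _ "\<lambda>i t. h t $ i"], rule exI[of _ "\<lambda>j t. a j (h t)"]) (simp add: *)
qed


lemma rrank_wit:
  fixes Bk :: "nat \<Rightarrow> nat \<Rightarrow> bool" and N :: nat
  shows "\<exists>U W. \<forall>i<N. \<forall>j<N. (Bk i j \<longleftrightarrow> (\<Sum>t<rrank N N Bk. U i t * W j t) \<ge> (1/2::real))"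
proof -
  let ?P = "\<lambda>q. \<exists>M :: real mat. M \<in> carrier_mat N N \<and> (\<forall>i<N. \<forall>j<N. round_real (M $$ (i,j)) = Bk i j) \<and> vec_space.rank N M = q"
  define M0 :: "real mat" where "M0 = mat N N (\<lambda>(i,j). if Bk i j then 1 else 0)"
  have "?P (vec_space.rank N M0)" unfolding M0_def round_real_def
    by (intro exI[of _ "mat N N (\<lambda>(i,j). if Bk i j then 1 else 0) :: real mat"]) auto
  then have "?P (rrank N N Bk)" unfolding rrank_def by (rule LeastI)
  then obtain M where M: "M \<in> carrier_mat N N" "\<forall>i<N. \<forall>j<N. round_real (M $$ (i,j)) = Bk i j"
     "vec_space.rank N M = rrank N N Bk" by blast
  obtain U W where UW: "\<forall>i<N. \<forall>j<N. M $$ (i,j) = (\<Sum>t<vec_space.rank N M. U i t * W j t)"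
    using vec_space.rank_factor[OF M(1)] by blast
  have "\<forall>i<N. \<forall>j<N. (Bk i j \<longleftrightarrow> (\<Sum>t<rrank N N Bk. U i t * W j t) \<ge> (1/2::real))"
  proof (intro allI impI)
    fix i j assume ij: "i < N" "j < N"
    have "Bk i j = round_real (M $$ (i,j))" using M(2) ij by simp
    also have "M $$ (i,j) = (\<Sum>t<rrank N N Bk. U i t * W j t)" using UW M(3) ij by simp
    finally show "Bk i j \<longleftrightarrow> (\<Sum>t<rrank N N Bk. U i t * W j t) \<ge> (1/2::real)"
      unfolding round_real_def .
  qed
  then show ?thesis by (intro exI)
qed

lemma dr_mono:
  fixes S :: "nat \<Rightarrow> nat \<Rightarrow> real"
  assumes "i<N" "j<N" "i'<N" "j'<N" "S i j > S i' j'"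
  shows "dense_rank N S i j < dense_rank N S i' j'"
proof -
  let ?X = "\<lambda>s. {v. (\<exists>a<N. \<exists>b<N. v = S a b) \<and> v > s}"
  have fin: "finite (?X s)" for s
    by (rule finite_subset[of _ "(\<lambda>(a,b). S a b) ` ({..<N}\<times>{..<N})"]) auto
  have "?X (S i j) \<subset> ?X (S i' j')" using assms by auto
  hence "card (?X (S i j)) < card (?X (S i' j'))" by (rule psubset_card_mono[OF fin])
  thus ?thesis unfolding dense_rank_def by simp
qed

lemma consistent_from:
  assumes "S \<in> rescal_tensors N K r" "\<forall>k<K. \<forall>i<N. \<forall>j<N. (B k i j \<longleftrightarrow> S k i j \<ge> 1/2)"
  shows "\<exists>P \<in> pi_tensor N ` rescal_tensors N K r. consistent N K P B"
proof
  show "pi_tensor N S \<in> pi_tensor N ` rescal_tensors N K r" using assms(1) by blast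
  show "consistent N K (pi_tensor N S) B" unfolding consistent_def pi_tensor_def
  proof (intro allI impI)
    fix k i j i' j'
    assume h: "k < K" "i < N" "j < N" "i' < N" "j' < N" "B k i j \<and> \<not> B k i' j'"
    have e1: "B k i j \<longleftrightarrow> S k i j \<ge> 1/2" using assms(2) h(1,2,3) by blast
    have e2: "B k i' j' \<longleftrightarrow> S k i' j' \<ge> 1/2" using assms(2) h(1,4,5) by blast
    have "S k i j > S k i' j'" using h(6) e1 e2 by linarith
    then show "(if i < N \<and> j < N then dense_rank N (S k) i j else 0)
        < (if i' < N \<and> j' < N then dense_rank N (S k) i' j' else 0)"
      using dr_mono[of i N j i' j' "S k"] h by simp
  qed
qed


lemma case_big:
  fixes N K r :: nat and B :: "nat \<Rightarrow> nat \<Rightarrow> nat \<Rightarrow> bool"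
  assumes "r \<ge> N"
  shows "\<exists>P \<in> pi_tensor N ` rescal_tensors N K r. consistent N K P B"
proof (rule consistent_from)
  define S :: "nat \<Rightarrow> nat \<Rightarrow> nat \<Rightarrow> real" where "S = (\<lambda>k i j. if B k i j then 1 else 0)"
  show "\<forall>k<K. \<forall>i<N. \<forall>j<N. (B k i j \<longleftrightarrow> S k i j \<ge> 1/2)" unfolding S_def by simp
  have "\<forall>k<K. \<forall>i<N. \<forall>j<N. S k i j = (\<Sum>a<r. \<Sum>b<r. (if a = i then 1 else 0) *
      (if a < N \<and> b < N \<and> B k a b then 1 else 0) * (if b = j then (1::real) else 0))"
  proof (intro allI impI)
    fix k i j assume h: "k < K" "i < N" "j < N"
    have e: "\<And>a b. (if a = i then 1 else 0) * (if a < N \<and> b < N \<and> B k a b then 1 else 0) * (if b = j then 1 else 0)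
       = (if a = i then (if b = j then (if a < N \<and> b < N \<and> B k a b then 1 else 0) else 0) else (0::real))" by simp
    have "(\<Sum>a<r. \<Sum>b<r. (if a = i then 1 else 0) *
      (if a < N \<and> b < N \<and> B k a b then 1 else 0) * (if b = j then (1::real) else 0))
      = (if B k i j then 1 else 0)"
    proof -
      have f: "\<And>a. (\<Sum>b<r. (if a = i then (if b = j then (if a < N \<and> b < N \<and> B k a b then 1 else 0) else 0) else (0::real)))
         = (if a = i then (if a < N \<and> j < N \<and> B k a j then 1 else 0) else 0)"
        using h assms by (simp add: sum.delta)
      show ?thesis unfolding e f using h assms by (simp add: sum.delta)
    qed
    then show "S k i j = (\<Sum>a<r. \<Sum>b<r. (if a = i then 1 else 0) *
      (if a < N \<and> b < N \<and> B k a b then 1 else 0) * (if b = j then (1::real) else 0))"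
      unfolding S_def by simp
  qed
  then show "S \<in> rescal_tensors N K r" unfolding rescal_tensors_def by (intro CollectI exI)
qed


lemma case_small:
  fixes N K r :: nat and B :: "nat \<Rightarrow> nat \<Rightarrow> nat \<Rightarrow> bool"
    and q :: "nat \<Rightarrow> nat" and U W :: "nat \<Rightarrow> nat \<Rightarrow> nat \<Rightarrow> real"
  assumes r: "r \<ge> 2 * (\<Sum>k<K. q k)"
    and UW: "\<forall>k<K. \<forall>i<N. \<forall>j<N. (B k i j \<longleftrightarrow> (\<Sum>t<q k. U k i t * W k j t) \<ge> 1/2)"
  shows "\<exists>P \<in> pi_tensor N ` rescal_tensors N K r. consistent N K P B"
proof (rule consistent_from)
  define S where "S = (\<lambda>k i j. \<Sum>t<q k. U k i t * W k j t)"
  show "\<forall>k<K. \<forall>i<N. \<forall>j<N. (B k i j \<longleftrightarrow> S k i j \<ge> 1/2)" using UW unfolding S_def by simp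
  define off where "off k = (\<Sum>l<k. q l)" for k
  define p where "p k s t = 2*off k + s * q k + t" for k s t :: nat
  define D where "D = {(k,s,t). k<K \<and> s<(2::nat) \<and> t<q k}"
  define pf where "pf = (\<lambda>(k,s,t). p k s t)"
  have offmono: "off k \<le> off k'" if "k \<le> k'" for k k'
    unfolding off_def by (rule sum_mono2) (use that in auto)
  have offsuc: "off (Suc k) = off k + q k" for k unfolding off_def by simp
  have pbound: "p k s t < 2 * off (Suc k)" if "s < 2" "t < q k" for k s t
  proof -
    have "s * q k + t < 2 * q k" using that by (cases "s = 0") (auto simp: less_2_cases_iff)
    then show ?thesis unfolding p_def offsuc by simp
  qed
  have plow: "2*off k \<le> p k s t" for k s t unfolding p_def by simp
  have inj: "inj_on pf D"
  proof (rule inj_onI)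
    fix x y assume x: "x \<in> D" and y: "y \<in> D" and e: "pf x = pf y"
    obtain k s t where xk: "x = (k,s,t)" by (cases x) auto
    obtain k' s' t' where yk: "y = (k',s',t')" by (cases y) auto
    have hx: "k < K" "s < 2" "t < q k" using x xk D_def by auto
    have hy: "k' < K" "s' < 2" "t' < q k'" using y yk D_def by auto
    have e': "p k s t = p k' s' t'" using e xk yk pf_def by simp
    have "\<not> k < k'"
    proof
      assume "k < k'"
      then have "p k s t < p k' s' t'" using pbound[OF hx(2,3)] offmono[of "Suc k" k'] plow[of k' s' t'] by linarith
      then show False using e' by simp
    qed
    moreover have "\<not> k' < k"
    proof
      assume "k' < k"
      then have "p k' s' t' < p k s t" using pbound[OF hy(2,3)] offmono[of "Suc k'" k] plow[of k s t] by linarith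
      then show False using e' by simp
    qed
    ultimately have kk: "k = k'" by simp
    then have "s * q k + t = s' * q k + t'" using e' unfolding p_def by simp
    then have "s = s' \<and> t = t'" using hx hy kk
      by (auto simp: less_2_cases_iff)
    then show "x = y" using xk yk kk by simp
  qed
  have offK: "off K = (\<Sum>k<K. q k)" unfolding off_def by simp
  have prbound: "p k s t < r" if "k < K" "s < 2" "t < q k" for k s t
    using pbound[OF that(2,3)] offmono[of "Suc k" K] that(1) r offK by linarith
  define A where "A i a = (case inv_into D pf a of (k,s,t) \<Rightarrow> if s = 0 then U k i t else W k i t)" for i a
  have A0: "A i (p k 0 t) = U k i t" if "k < K" "t < q k" for i k t
  proof -
    have "inv_into D pf (pf (k,0,t)) = (k,0,t)" by (rule inv_into_f_f[OF inj]) (use that in \<open>simp add: D_def\<close>)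
    then show ?thesis unfolding A_def pf_def by simp
  qed
  have A1: "A i (p k 1 t) = W k i t" if "k < K" "t < q k" for i k t
  proof -
    have "inv_into D pf (pf (k,1,t)) = (k,1,t)" by (rule inv_into_f_f[OF inj]) (use that in \<open>simp add: D_def\<close>)
    then show ?thesis unfolding A_def pf_def by simp
  qed
  define R where "R k a b = (\<Sum>t<q k. if a = p k 0 t \<and> b = p k 1 t then 1 else (0::real))" for k a b
  have "\<forall>k<K. \<forall>i<N. \<forall>j<N. S k i j = (\<Sum>a<r. \<Sum>b<r. A i a * R k a b * A j b)"
  proof (intro allI impI)
    fix k i j assume h: "k < K" "i < N" "j < N"
    let ?f = "\<lambda>a b t. if a = p k 0 t \<and> b = p k 1 t then A i a * A j b else 0"
    have t: "A i a * R k a b * A j b = (\<Sum>t<q k. ?f a b t)" for a b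
      unfolding R_def sum_distrib_left sum_distrib_right by (intro sum.cong) auto
    have "(\<Sum>a<r. \<Sum>b<r. A i a * R k a b * A j b) = (\<Sum>a<r. \<Sum>b<r. \<Sum>t<q k. ?f a b t)"
      unfolding t ..
    also have "\<dots> = (\<Sum>a<r. \<Sum>t<q k. \<Sum>b<r. ?f a b t)" by (rule sum.cong[OF refl], rule sum.swap)
    also have "\<dots> = (\<Sum>t<q k. \<Sum>a<r. \<Sum>b<r. ?f a b t)" by (rule sum.swap)
    also have "\<dots> = (\<Sum>t<q k. A i (p k 0 t) * A j (p k 1 t))"
    proof (rule sum.cong[OF refl])
      fix t assume tt: "t \<in> {..<q k}"
      have b0: "p k 0 t < r" and b1: "p k 1 t < r" using prbound[OF h(1)] tt by auto
      have g: "(\<Sum>b<r. ?f a b t) = (if a = p k 0 t then A i a * A j (p k 1 t) else 0)" for a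
        using b1 by (cases "a = p k 0 t") (simp_all add: sum.delta)
      show "(\<Sum>a<r. \<Sum>b<r. ?f a b t) = A i (p k 0 t) * A j (p k 1 t)"
        unfolding g using b0 by (simp add: sum.delta)
    qed
    also have "\<dots> = S k i j" unfolding S_def using A0 A1 h(1) by simp
    finally show "S k i j = (\<Sum>a<r. \<Sum>b<r. A i a * R k a b * A j b)" ..
  qed
  then show "S \<in> rescal_tensors N K r" unfolding rescal_tensors_def by (intro CollectI exI)
qed


theorem theorem11:
  fixes N K r :: nat and B :: "nat \<Rightarrow> nat \<Rightarrow> nat \<Rightarrow> bool"
  assumes "N \<ge> 2" and "K \<ge> 1" and "r \<ge> 1"
    and "r \<ge> min N (2 * (\<Sum>k<K. rrank N N (B k)))"
  shows "\<exists>P \<in> pi_tensor N ` rescal_tensors N K r. consistent N K P B"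
proof (cases "N \<le> 2 * (\<Sum>k<K. rrank N N (B k))")
  case True
  then have "r \<ge> N" using assms(4) by simp
  then show ?thesis by (rule case_big)
next
  case False
  then have r: "r \<ge> 2 * (\<Sum>k<K. rrank N N (B k))" using assms(4) by simp
  have "\<forall>k. \<exists>U W. \<forall>i<N. \<forall>j<N. (B k i j \<longleftrightarrow> (\<Sum>t<rrank N N (B k). U i t * W j t) \<ge> (1/2::real))"
    using rrank_wit by (intro allI) (rule rrank_wit)
  then have "\<exists>U. \<forall>k. \<exists>W. \<forall>i<N. \<forall>j<N. (B k i j \<longleftrightarrow> (\<Sum>t<rrank N N (B k). U k i t * W j t) \<ge> (1/2::real))"
    by (rule choice)
  then obtain U where "\<forall>k. \<exists>W. \<forall>i<N. \<forall>j<N. (B k i j \<longleftrightarrow> (\<Sum>t<rrank N N (B k). U k i t * W j t) \<ge> (1/2::real))"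
    by (elim exE)
  then have "\<exists>W. \<forall>k. \<forall>i<N. \<forall>j<N. (B k i j \<longleftrightarrow> (\<Sum>t<rrank N N (B k). U k i t * W k j t) \<ge> (1/2::real))"
    by (rule choice)
  then obtain W where UW: "\<forall>k. \<forall>i<N. \<forall>j<N. (B k i j \<longleftrightarrow> (\<Sum>t<rrank N N (B k). U k i t * W k j t) \<ge> (1/2::real))"
    by (elim exE)
  have UW': "\<forall>k<K. \<forall>i<N. \<forall>j<N. (B k i j \<longleftrightarrow> (\<Sum>t<rrank N N (B k). U k i t * W k j t) \<ge> (1/2::real))"
    using UW by simp
  show ?thesis
    by (rule case_small[where q = "\<lambda>k. rrank N N (B k)" and U = U and W = W, OF r UW'])
qed

end
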